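(* Let $S$ be a uniquely $2$-divisible inverse semigroup and let $\alpha$ be an automorphism of $S$ satisfying $\alpha^2 = 1$ and $\mathrm{Fix}(\alpha) = E(S)$. Then $x\alpha = x^{-1}$ for all $x\in S$, and consequently $S$ is commutative.
   Context: A semigroup $S$ is uniquely $2$-divisible if the squaring map $S\to S$, $x\mapsto x^2$, is a bijection. $E(S)$ denotes the set of idempotents of $S$; for an automorphism $\alpha$ of $S$ (written on the right, $x\mapsto x\alpha$), $\mathrm{Fix}(\alpha) = \{x\in S \mid x\alpha = x\}$. In an inverse semigroup, $x^{-1}$ denotes the unique inverse of $x$ (the unique element with $xx^{-1}x=x$ and $x^{-1}xx^{-1}=x^{-1}$). *)

theory Defs
  imports Main
begin

text \<open>Semigroups are modelled by the type class semigroup_mult (S is the whole type).\<close>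

definition inverse_semigroup :: "'a::semigroup_mult itself \<Rightarrow> bool" where
  "inverse_semigroup _ \<longleftrightarrow> (\<forall>x::'a. \<exists>!y. x * y * x = x \<and> y * x * y = y)"

definition sinv :: "'a::semigroup_mult \<Rightarrow> 'a" where
  "sinv x = (THE y. x * y * x = x \<and> y * x * y = y)"

definition uniquely_2_divisible :: "'a::semigroup_mult itself \<Rightarrow> bool" where
  "uniquely_2_divisible _ \<longleftrightarrow> bij (\<lambda>x::'a. x * x)"

definition idempotents :: "'a::semigroup_mult set" where
  "idempotents = {e. e * e = e}"

definition semigroup_automorphism :: "('a::semigroup_mult \<Rightarrow> 'a) \<Rightarrow> bool" where
  "semigroup_automorphism f \<longleftrightarrow> bij f \<and> (\<forall>x y. f (x * y) = f x * f y)"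

definition Fix :: "('a \<Rightarrow> 'a) \<Rightarrow> 'a set" where
  "Fix f = {x. f x = x}"

end

theory Submission
  imports Defs
begin

lemma isg_ex: "inverse_semigroup TYPE('a::semigroup_mult) \<Longrightarrow> \<exists>!y. (x::'a) * y * x = x \<and> y * x * y = y"
  unfolding inverse_semigroup_def by blast

lemma sinv_prop:
  assumes I: "inverse_semigroup TYPE('a::semigroup_mult)"
  shows "(x::'a) * sinv x * x = x \<and> sinv x * x * sinv x = sinv x"
  unfolding sinv_def by (rule theI'[OF isg_ex[OF I]])

lemma sinv_uniq:
  assumes I: "inverse_semigroup TYPE('a::semigroup_mult)"
    and "(x::'a) * y * x = x" "y * x * y = y"
  shows "sinv x = y"
  unfolding sinv_def by (rule the1_equality[OF isg_ex[OF I]]) (use assms(2,3) in auto)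

lemma sinv1: "inverse_semigroup TYPE('a::semigroup_mult) \<Longrightarrow> (x::'a) * (sinv x * x) = x"
  using sinv_prop by (metis mult.assoc)
lemma sinv2: "inverse_semigroup TYPE('a::semigroup_mult) \<Longrightarrow> sinv (x::'a) * (x * sinv x) = sinv x"
  using sinv_prop by (metis mult.assoc)

lemma sinv_sinv:
  assumes I: "inverse_semigroup TYPE('a::semigroup_mult)"
  shows "sinv (sinv (x::'a)) = x"
  using sinv_uniq[OF I] sinv_prop[OF I] by blast

lemma sinv_idem:
  assumes I: "inverse_semigroup TYPE('a::semigroup_mult)" and "(e::'a) * e = e"
  shows "sinv e = e"
  using sinv_uniq[OF I, of e e] assms(2) by simp

lemma idem_comm:
  assumes I: "inverse_semigroup TYPE('a::semigroup_mult)"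
    and e: "(e::'a) * e = e" and f: "f * f = f"
  shows "e * f = f * e"
proof -
  have gen: "a * b * (a * b) = a * b" if a: "(a::'a) * a = a" and b: "b * b = b" for a b
  proof -
    define c where "c = sinv (a * b)"
    have c1: "a * b * c * (a * b) = a * b" and c2: "c * (a * b) * c = c"
      using sinv_prop[OF I, of "a*b"] unfolding c_def by auto
    have "a * b * (b * c * a) * (a * b) = a * b"
      using c1 a b by (metis mult.assoc)
    moreover have "b * c * a * (a * b) * (b * c * a) = b * c * a"
      using c2 a b by (metis mult.assoc)
    ultimately have "sinv (a*b) = b * c * a"
      using sinv_uniq[OF I] by (metis mult.assoc)
    hence cc: "c = b * c * a" unfolding c_def .
    have "c * c = c"
    proof -
      have "c * c = b * c * a * (b * c * a)" using cc by simp
      also have "\<dots> = b * (c * (a * b) * c) * a" by (simp add: mult.assoc)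
      also have "\<dots> = c" using c2 cc by simp
      finally show ?thesis .
    qed
    hence "sinv c = c" using sinv_idem[OF I] by blast
    moreover have "sinv c = a * b"
      using sinv_uniq[OF I, of c "a*b"] c1 c2 by (simp add: mult.assoc)
    ultimately have "a * b = c" by simp
    thus ?thesis using \<open>c * c = c\<close> by simp
  qed
  have ef: "e*f*(e*f) = e*f" and fe: "f*e*(f*e) = f*e" using gen e f by auto
  have "e * f * (f * e) * (e * f) = e * f"
    using ef e f by (metis mult.assoc)
  moreover have "f * e * (e * f) * (f * e) = f * e"
    using fe e f by (metis mult.assoc)
  ultimately have "sinv (e*f) = f * e" using sinv_uniq[OF I] by blast
  moreover have "sinv (e*f) = e * f" using sinv_idem[OF I ef] .
  ultimately show ?thesis by simp
qed

lemma idem_l: "inverse_semigroup TYPE('a::semigroup_mult) \<Longrightarrow> (x::'a) * sinv x * (x * sinv x) = x * sinv x"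
  using sinv_prop by (metis mult.assoc)
lemma idem_r: "inverse_semigroup TYPE('a::semigroup_mult) \<Longrightarrow> sinv (x::'a) * x * (sinv x * x) = sinv x * x"
  using sinv_prop by (metis mult.assoc)

lemma sinv_mult:
  assumes I: "inverse_semigroup TYPE('a::semigroup_mult)"
  shows "sinv ((x::'a) * y) = sinv y * sinv x"
proof (rule sinv_uniq[OF I])
  have c: "sinv x * x * (y * sinv y) = y * sinv y * (sinv x * x)"
    using idem_comm[OF I idem_r[OF I] idem_l[OF I]] .
  have "x * y * (sinv y * sinv x) * (x * y) = x * (y * sinv y * (sinv x * x)) * y"
    by (simp add: mult.assoc)
  also have "\<dots> = x * (sinv x * x * (y * sinv y)) * y" using c by simp
  also have "\<dots> = (x * sinv x * x) * (y * sinv y * y)" by (simp add: mult.assoc)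
  also have "\<dots> = x * y" using sinv_prop[OF I] by simp
  finally show "x * y * (sinv y * sinv x) * (x * y) = x * y" .
  have "sinv y * sinv x * (x * y) * (sinv y * sinv x) = sinv y * (sinv x * x * (y * sinv y)) * sinv x"
    by (simp add: mult.assoc)
  also have "\<dots> = sinv y * (y * sinv y * (sinv x * x)) * sinv x" using c by simp
  also have "\<dots> = (sinv y * y * sinv y) * (sinv x * x * sinv x)" by (simp add: mult.assoc)
  also have "\<dots> = sinv y * sinv x" using sinv_prop[OF I] by simp
  finally show "sinv y * sinv x * (x * y) * (sinv y * sinv x) = sinv y * sinv x" .
qed

lemma aut_sinv:
  assumes I: "inverse_semigroup TYPE('a::semigroup_mult)"
    and A: "semigroup_automorphism (\<alpha>::'a \<Rightarrow> 'a)"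
  shows "sinv (\<alpha> x) = \<alpha> (sinv x)"
proof -
  have h: "\<alpha> (a * b) = \<alpha> a * \<alpha> b" for a b using A unfolding semigroup_automorphism_def by blast
  show ?thesis
    apply (rule sinv_uniq[OF I])
    using sinv_prop[OF I, of x] by (metis h)+
qed

theorem theorem1p4:
  fixes \<alpha> :: "'a::semigroup_mult \<Rightarrow> 'a"
  assumes "inverse_semigroup TYPE('a)"
    and "uniquely_2_divisible TYPE('a)"
    and "semigroup_automorphism \<alpha>"
    and "\<alpha> \<circ> \<alpha> = id"
    and "Fix \<alpha> = idempotents"
  shows "(\<forall>x. \<alpha> x = sinv x) \<and> (\<forall>x y::'a. x * y = y * x)"
proof -
  note I = assms(1)
  have h: "\<alpha> (a * b) = \<alpha> a * \<alpha> b" for a b :: 'a using assms(3) unfolding semigroup_automorphism_def by blast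
  have inv: "\<alpha> (\<alpha> a) = a" for a :: 'a using assms(4) by (metis comp_apply id_apply)
  have fx: "\<alpha> z = z \<longleftrightarrow> z * z = z" for z :: 'a using assms(5) unfolding Fix_def idempotents_def by blast
  have bj: "bij (\<lambda>x::'a. x * x)" using assms(2) unfolding uniquely_2_divisible_def .
  have sqinj: "a = b" if "a * a = b * b" for a b :: 'a using bj that unfolding bij_def inj_def by blast
  have sqsurj: "\<exists>r. r * r = z" for z :: 'a using bj unfolding bij_def surj_def by metis
  have as: "sinv (\<alpha> z) = \<alpha> (sinv z)" for z :: 'a using aut_sinv[OF I assms(3)] .
  have ss: "sinv (sinv z) = z" for z :: 'a using sinv_sinv[OF I] by blast
  have sm: "sinv (a * b) = sinv b * sinv a" for a b :: 'a using sinv_mult[OF I] by blast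
  have p1: "z * sinv z * z = z" and p2: "sinv z * z * sinv z = sinv z" for z :: 'a
    using sinv_prop[OF I] by auto
  have main: "\<alpha> x = sinv x" for x
  proof -
    define a where "a = \<alpha> x"
    define u where "u = x * sinv a"
    have ua: "\<alpha> u = sinv u"
      unfolding u_def a_def by (simp add: h as[symmetric] inv sm ss)
    obtain r where r: "r * r = u" using sqsurj by blast
    have "\<alpha> r * \<alpha> r = sinv r * sinv r" using ua r h sm by metis
    hence ra: "\<alpha> r = sinv r" by (rule sqinj)
    define g where "g = r * sinv r"
    have gi: "g * g = g" unfolding g_def using idem_l[OF I] .
    have "\<alpha> g = sinv r * r" unfolding g_def by (simp add: h ra as[symmetric] ss)
    hence grr: "g = sinv r * r" using gi fx by metis
    have rg: "r * g = r" using p1 grr by (simp add: mult.assoc)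
    have gr: "g * r = r" using p1 g_def by simp
    have rg': "sinv r * g = sinv r" using p2 g_def by (simp add: mult.assoc)
    have gr': "g * sinv r = sinv r" using p2 grr by simp
    define e where "e = x * sinv x"
    have xsx: "sinv x * x = sinv a * a"
    proof -
      have "sinv a * a = \<alpha> (sinv x * x)" unfolding a_def by (simp add: h as)
      also have "\<dots> = sinv x * x" using fx idem_r[OF I] by blast
      finally show ?thesis by simp
    qed
    have "u * sinv u = e"
      unfolding u_def e_def sm ss
      using xsx p1 by (metis mult.assoc)
    moreover have "u * sinv u = g" unfolding r[symmetric] sm
      by (metis g_def gr' mult.assoc rg)
    ultimately have eg: "e = g" by simp
    have ax: "sinv u * x = a"
      unfolding u_def sm ss using xsx p1 by (metis mult.assoc)
    define y where "y = sinv r * x"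
    have "\<alpha> y = r * a" unfolding y_def by (simp add: h as[symmetric] ra ss a_def)
    also have "\<dots> = r * (sinv r * sinv r * x)" using ax r sm by metis
    also have "\<dots> = sinv r * x" using g_def gr' by (metis mult.assoc)
    finally have "\<alpha> y = y" unfolding y_def .
    hence yi: "y * y = y" using fx by blast
    have xry: "x = r * y" unfolding y_def using eg e_def p1 g_def by (metis mult.assoc)
    have "sinv r * e * r = g"
      using eg grr g_def gi by (metis mult.assoc)
    moreover have "sinv r * e * r = g * y * g"
    proof -
      have "e = r * y * sinv r" unfolding e_def xry sm sinv_idem[OF I yi]
        using yi by (metis mult.assoc)
      thus ?thesis using grr by (simp add: mult.assoc)
    qed
    ultimately have "g = g * y * g" by simp
    also have "\<dots> = g * g * y" using idem_comm[OF I yi gi] by (simp add: mult.assoc)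
    finally have gy: "g = g * y" using gi by simp
    have "x = r" using xry gy rg by (metis mult.assoc)
    thus ?thesis using ra by simp
  qed
  have c: "sinv p * sinv q = sinv q * sinv p" for p q :: 'a
    using main h sm by metis
  have "x * y = y * x" for x y :: 'a using c[of "sinv x" "sinv y"] ss by simp
  thus ?thesis using main by blast
qed

end
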